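(* Let $\mathbb{Z}_{\ge 0}$ be the commutative monoid of nonnegative integers under addition. Then the simplicial set $K(\mathbb{Z}_{\ge 0},2)$ is a Skvortsov–Shehtman complex but is not a Kan complex.
   Context: For a commutative monoid $M$ (written multiplicatively), $K(M,2)$ is the simplicial set whose $n$-simplices are families $(a_{ijk})_{0\le i<j<k\le n}$ of elements of $M$ satisfying $a_{ikl}a_{ijk}=a_{ijl}a_{jkl}$ for all $0\le i<j<k<l\le n$; the $j$-th face map omits all entries involving the index $j$ (and reindexes), and the $j$-th degeneracy map repeats the index $j$, inserting the unit of $M$ at the new entries (it is the Duskin nerve of the one-object, one-1-morphism 2-category whose 2-morphisms are the elements of $M$). For $M=\mathbb{Z}_{\ge0}$ the monoid operation is addition, so the relations read $a_{ikl}+a_{ijk}=a_{ijl}+a_{jkl}$. A simplicial set $S$ is a Skvortsov–Shehtman complex (SS-complex) if it satisfies all Beck–Chevalley conditions $\mathrm{BC}_{p,q}[n]$: for all $n>1$ and all $0\le p<q\le n$, for any $(n-1)$-simplices $c_p,c_q$ of $S$ with $d_pc_q=d_{q-1}c_p$ there exists an $n$-simplex $x$ of $S$ with $d_px=c_p$ and $d_qx=c_q$. A Kan complex is a simplicial set satisfying the Kan horn-filling conditions for all $n>0$, $0\le p\le n$. *)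

theory Defs
  imports Main
begin

text \<open>A (semi)simplicial set presented by its sets of n-simplices S n and face maps
  face n j : S n \<rightarrow> S (n-1) (the j-th face of an n-simplex, 0 \<le> j \<le> n).
  Degeneracies play no role in the Beck-Chevalley or Kan conditions.\<close>

definition SS_complex :: "(nat \<Rightarrow> 'a set) \<Rightarrow> (nat \<Rightarrow> nat \<Rightarrow> 'a \<Rightarrow> 'a) \<Rightarrow> bool" where
  "SS_complex S face \<longleftrightarrow>
     (\<forall>n p q cp cq. 1 < n \<longrightarrow> p < q \<longrightarrow> q \<le> n \<longrightarrow>
        cp \<in> S (n - 1) \<longrightarrow> cq \<in> S (n - 1) \<longrightarrow>
        face (n - 1) p cq = face (n - 1) (q - 1) cp \<longrightarrow>
        (\<exists>x \<in> S n. face n p x = cp \<and> face n q x = cq))"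

definition Kan_complex :: "(nat \<Rightarrow> 'a set) \<Rightarrow> (nat \<Rightarrow> nat \<Rightarrow> 'a \<Rightarrow> 'a) \<Rightarrow> bool" where
  "Kan_complex S face \<longleftrightarrow>
     (\<forall>n p (c :: nat \<Rightarrow> 'a). 0 < n \<longrightarrow> p \<le> n \<longrightarrow>
        (\<forall>i \<le> n. i \<noteq> p \<longrightarrow> c i \<in> S (n - 1)) \<longrightarrow>
        (\<forall>i j. i < j \<longrightarrow> j \<le> n \<longrightarrow> i \<noteq> p \<longrightarrow> j \<noteq> p \<longrightarrow>
            face (n - 1) i (c j) = face (n - 1) (j - 1) (c i)) \<longrightarrow>
        (\<exists>x \<in> S n. \<forall>i \<le> n. i \<noteq> p \<longrightarrow> face n i x = c i))"

text \<open>K(Z_{\<ge>0},2): an n-simplex is a family a i j k (i<j<k\<le>n) of naturals satisfying the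
  cocycle relation; we represent it as a function extended by 0 outside the index range.\<close>

definition K2_simplices :: "nat \<Rightarrow> (nat \<Rightarrow> nat \<Rightarrow> nat \<Rightarrow> nat) set" where
  "K2_simplices n = {a. (\<forall>i j k. \<not> (i < j \<and> j < k \<and> k \<le> n) \<longrightarrow> a i j k = 0) \<and>
      (\<forall>i j k l. i < j \<longrightarrow> j < k \<longrightarrow> k < l \<longrightarrow> l \<le> n \<longrightarrow>
          a i k l + a i j k = a i j l + a j k l)}"

definition skip :: "nat \<Rightarrow> nat \<Rightarrow> nat" where
  "skip j i = (if i < j then i else i + 1)"

definition rep :: "nat \<Rightarrow> nat \<Rightarrow> nat" where
  "rep j i = (if i \<le> j then i else i - 1)"

definition K2_face :: "nat \<Rightarrow> nat \<Rightarrow> (nat \<Rightarrow> nat \<Rightarrow> nat \<Rightarrow> nat) \<Rightarrow> (nat \<Rightarrow> nat \<Rightarrow> nat \<Rightarrow> nat)" where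
  "K2_face n j a = (\<lambda>i k l. if i < k \<and> k < l \<and> l \<le> n - 1
                      then a (skip j i) (skip j k) (skip j l) else 0)"

text \<open>degeneracy (not needed for the statement): inserts the unit 0 at new entries\<close>
definition K2_degen :: "nat \<Rightarrow> nat \<Rightarrow> (nat \<Rightarrow> nat \<Rightarrow> nat \<Rightarrow> nat) \<Rightarrow> (nat \<Rightarrow> nat \<Rightarrow> nat \<Rightarrow> nat)" where
  "K2_degen n j a = (\<lambda>i k l. if i < k \<and> k < l \<and> l \<le> n + 1
      \<and> rep j i < rep j k \<and> rep j k < rep j l
      then a (rep j i) (rep j k) (rep j l) else 0)"

end

theory Submission
  imports Defs
begin

definition unsk :: "nat \<Rightarrow> nat \<Rightarrow> nat" where
  "unsk p v = (if v < p then v else v - 1)"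

definition Yf :: "(nat \<Rightarrow> nat \<Rightarrow> nat \<Rightarrow> nat) \<Rightarrow> nat \<Rightarrow> nat \<Rightarrow> nat \<Rightarrow> int" where
  "Yf f r i j = (if r < i then int (f r i j) else if r = i then 0
     else if r < j then - int (f i r j) else if r = j then 0 else int (f i j r))"

lemma cocyc_rep:
  assumes coc: "\<And>a b c d. a \<in> V \<Longrightarrow> b \<in> V \<Longrightarrow> c \<in> V \<Longrightarrow> d \<in> V \<Longrightarrow> a < b \<Longrightarrow> b < c \<Longrightarrow> c < d
      \<Longrightarrow> f a c d + f a b c = f a b d + f b c d"
  and V: "r \<in> V" "i \<in> V" "j \<in> V" "k \<in> V" and o: "i < j" "j < k"
  shows "int (f i j k) = Yf f r i j + Yf f r j k - Yf f r i k"
proof -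
  consider "r < i" | "r = i" | "i < r \<and> r < j" | "r = j" | "j < r \<and> r < k" | "r = k" | "k < r"
    by linarith
  then show ?thesis
  proof cases
    case 1
    then have "f r j k + f r i j = f r i k + f i j k" using coc[of r i j k] V o by simp
    then show ?thesis using 1 o unfolding Yf_def by simp
  next
    case 2 then show ?thesis using o unfolding Yf_def by simp
  next
    case 3
    then have "f i j k + f i r j = f i r k + f r j k" using coc[of i r j k] V o by simp
    then show ?thesis using 3 o unfolding Yf_def by simp
  next
    case 4 then show ?thesis using o unfolding Yf_def by simp
  next
    case 5
    then have "f i r k + f i j r = f i j k + f j r k" using coc[of i j r k] V o by simp
    then show ?thesis using 5 o unfolding Yf_def by simp
  next
    case 6 then show ?thesis using o unfolding Yf_def by simp
  next
    case 7
    then have "f i k r + f i j k = f i j r + f j k r" using coc[of i j k r] V o by simp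
    then show ?thesis using 7 o unfolding Yf_def by simp
  qed
qed

lemma fromY:
  assumes tri: "\<And>i j k. i < j \<Longrightarrow> j < k \<Longrightarrow> k \<le> n \<Longrightarrow> y i k \<le> y i j + y j k"
  shows "(\<lambda>i j k. if i < j \<and> j < k \<and> k \<le> n then nat (y i j + y j k - y i k) else 0) \<in> K2_simplices n"
  unfolding K2_simplices_def
proof (intro CollectI conjI allI impI)
  fix i j k l :: nat assume h: "i < j" "j < k" "k < l" "l \<le> n"
  have "y i l \<le> y i k + y k l" "y i k \<le> y i j + y j k" "y i l \<le> y i j + y j l" "y j l \<le> y j k + y k l"
    using tri h by auto
  then show "(if i < k \<and> k < l \<and> l \<le> n then nat (y i k + y k l - y i l) else 0) +
         (if i < j \<and> j < k \<and> k \<le> n then nat (y i j + y j k - y i k) else 0) =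
         (if i < j \<and> j < l \<and> l \<le> n then nat (y i j + y j l - y i l) else 0) +
         (if j < k \<and> k < l \<and> l \<le> n then nat (y j k + y k l - y j l) else 0)"
    using h by simp
qed auto

lemma not_Kan: "\<not> Kan_complex K2_simplices K2_face"
proof
  assume K: "Kan_complex K2_simplices K2_face"
  define e :: "nat \<Rightarrow> nat \<Rightarrow> nat \<Rightarrow> nat" where "e = (\<lambda>a b c. if a = 0 \<and> b = 1 \<and> c = 2 then 1 else 0)"
  define c :: "nat \<Rightarrow> nat \<Rightarrow> nat \<Rightarrow> nat \<Rightarrow> nat" where "c = (\<lambda>i. if i = 3 then e else (\<lambda>_ _ _. 0))"
  have cS: "c i \<in> K2_simplices 2" for i
    unfolding c_def e_def K2_simplices_def by auto
  have cf: "K2_face 2 i (c j) = K2_face 2 (j - 1) (c i)" for i j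
    unfolding K2_face_def by (rule ext)+ auto
  obtain x where x: "x \<in> K2_simplices 3" "\<forall>i\<le>3. i \<noteq> 1 \<longrightarrow> K2_face 3 i x = c i"
    using K[unfolded Kan_complex_def, rule_format, of 3 1 c] cS cf by auto
  have "K2_face 3 0 x 0 1 2 = c 0 0 1 2" "K2_face 3 2 x 0 1 2 = c 2 0 1 2" "K2_face 3 3 x 0 1 2 = c 3 0 1 2"
    using x(2) by auto
  then have "x 1 2 3 = 0" "x 0 1 3 = 0" "x 0 1 2 = 1"
    unfolding K2_face_def skip_def c_def e_def by (auto simp: eval_nat_numeral)
  moreover have "x 0 2 3 + x 0 1 2 = x 0 1 3 + x 1 2 3"
  proof -
    have "\<forall>i j k l. i < j \<longrightarrow> j < k \<longrightarrow> k < l \<longrightarrow> l \<le> 3 \<longrightarrow>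
          x i k l + x i j k = x i j l + x j k l"
      using x(1) unfolding K2_simplices_def by blast
    from this[rule_format, of 0 1 2 3] show ?thesis by simp
  qed
  ultimately show False by simp
qed

lemma skip_facts:
  "skip p a \<noteq> p" "a < b \<Longrightarrow> skip p a < skip p b" "l \<le> n - 1 \<Longrightarrow> 0 < n \<Longrightarrow> skip p l \<le> n"
  "unsk p (skip p a) = a"
  by (auto simp: skip_def unsk_def)

lemma SS_main:
  assumes n: "1 < n" and pq: "p < q" "q \<le> n"
  and cpS: "cp \<in> K2_simplices (n-1)" and cqS: "cq \<in> K2_simplices (n-1)"
  and compat: "K2_face (n-1) p cq = K2_face (n-1) (q-1) cp"
  shows "\<exists>x \<in> K2_simplices n. K2_face n p x = cp \<and> K2_face n q x = cq"
proof -
  define Pf where "Pf = (\<lambda>a b c. cp (unsk p a) (unsk p b) (unsk p c))"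
  define Qf where "Qf = (\<lambda>a b c. cq (unsk q a) (unsk q b) (unsk q c))"
  have cpz: "\<And>i j k. \<not> (i < j \<and> j < k \<and> k \<le> n - 1) \<Longrightarrow> cp i j k = 0"
   and cpc: "\<And>i j k l. i < j \<Longrightarrow> j < k \<Longrightarrow> k < l \<Longrightarrow> l \<le> n - 1 \<Longrightarrow> cp i k l + cp i j k = cp i j l + cp j k l"
    using cpS unfolding K2_simplices_def by blast+
  have cqz: "\<And>i j k. \<not> (i < j \<and> j < k \<and> k \<le> n - 1) \<Longrightarrow> cq i j k = 0"
   and cqc: "\<And>i j k l. i < j \<Longrightarrow> j < k \<Longrightarrow> k < l \<Longrightarrow> l \<le> n - 1 \<Longrightarrow> cq i k l + cq i j k = cq i j l + cq j k l"
    using cqS unfolding K2_simplices_def by blast+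
  have unsk_mono: "\<And>p a b. a < b \<Longrightarrow> a \<noteq> p \<Longrightarrow> b \<noteq> p \<Longrightarrow> unsk p a < unsk p b"
    by (auto simp: unsk_def)
  have unsk_le: "\<And>p a. a \<le> n \<Longrightarrow> a \<noteq> p \<Longrightarrow> p \<le> n \<Longrightarrow> unsk p a \<le> n - 1"
    by (auto simp: unsk_def)
  have Pcoc: "\<And>a b c d. a \<in> {v. v \<le> n \<and> v \<noteq> p} \<Longrightarrow> b \<in> {v. v \<le> n \<and> v \<noteq> p} \<Longrightarrow>
      c \<in> {v. v \<le> n \<and> v \<noteq> p} \<Longrightarrow> d \<in> {v. v \<le> n \<and> v \<noteq> p} \<Longrightarrow> a < b \<Longrightarrow> b < c \<Longrightarrow> c < d
      \<Longrightarrow> Pf a c d + Pf a b c = Pf a b d + Pf b c d"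
    unfolding Pf_def by (rule cpc[OF unsk_mono unsk_mono unsk_mono unsk_le]) (use pq in auto)
  have Qcoc: "\<And>a b c d. a \<in> {v. v \<le> n \<and> v \<noteq> q} \<Longrightarrow> b \<in> {v. v \<le> n \<and> v \<noteq> q} \<Longrightarrow>
      c \<in> {v. v \<le> n \<and> v \<noteq> q} \<Longrightarrow> d \<in> {v. v \<le> n \<and> v \<noteq> q} \<Longrightarrow> a < b \<Longrightarrow> b < c \<Longrightarrow> c < d
      \<Longrightarrow> Qf a c d + Qf a b c = Qf a b d + Qf b c d"
    unfolding Qf_def by (rule cqc[OF unsk_mono unsk_mono unsk_mono unsk_le]) (use pq in auto)
  obtain r where r: "r \<le> n" "r \<noteq> p" "r \<noteq> q"
  proof
    show "(if p \<noteq> 0 \<and> q \<noteq> 0 then 0 else if p \<noteq> 1 \<and> q \<noteq> 1 then 1 else 2) \<le> n" using n by auto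
  qed auto
  have Prep: "\<And>i j k. i < j \<Longrightarrow> j < k \<Longrightarrow> k \<le> n \<Longrightarrow> i \<noteq> p \<Longrightarrow> j \<noteq> p \<Longrightarrow> k \<noteq> p \<Longrightarrow>
      int (Pf i j k) = Yf Pf r i j + Yf Pf r j k - Yf Pf r i k"
  proof -
    fix i j k assume h: "i < j" "j < k" "k \<le> n" "i \<noteq> p" "j \<noteq> p" "k \<noteq> p"
    show "int (Pf i j k) = Yf Pf r i j + Yf Pf r j k - Yf Pf r i k"
      by (rule cocyc_rep[where V="{v. v \<le> n \<and> v \<noteq> p}", OF Pcoc]) (use r h in auto)
  qed
  have Qrep: "\<And>i j k. i < j \<Longrightarrow> j < k \<Longrightarrow> k \<le> n \<Longrightarrow> i \<noteq> q \<Longrightarrow> j \<noteq> q \<Longrightarrow> k \<noteq> q \<Longrightarrow>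
      int (Qf i j k) = Yf Qf r i j + Yf Qf r j k - Yf Qf r i k"
  proof -
    fix i j k assume h: "i < j" "j < k" "k \<le> n" "i \<noteq> q" "j \<noteq> q" "k \<noteq> q"
    show "int (Qf i j k) = Yf Qf r i j + Yf Qf r j k - Yf Qf r i k"
      by (rule cocyc_rep[where V="{v. v \<le> n \<and> v \<noteq> q}", OF Qcoc]) (use r h in auto)
  qed
  have wv: "skip p (unsk p (unsk q v)) = unsk q v \<and> skip (q-1) (unsk p (unsk q v)) = unsk p v
      \<and> unsk p (unsk q v) \<le> n - 1 - 1" if "v \<le> n" "v \<noteq> p" "v \<noteq> q" for v
    using that pq by (auto simp: skip_def unsk_def)
  have wm: "unsk p (unsk q a) < unsk p (unsk q b)" if "a < b" "a \<noteq> p" "a \<noteq> q" "b \<noteq> p" "b \<noteq> q" for a b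
    using that pq by (auto simp: unsk_def)
  have agree: "Pf a b c = Qf a b c" if "a < b" "b < c" "c \<le> n" "a \<noteq> p" "a \<noteq> q" "b \<noteq> p" "b \<noteq> q"
    "c \<noteq> p" "c \<noteq> q" for a b c
  proof -
    have "K2_face (n-1) p cq (unsk p (unsk q a)) (unsk p (unsk q b)) (unsk p (unsk q c)) =
          K2_face (n-1) (q-1) cp (unsk p (unsk q a)) (unsk p (unsk q b)) (unsk p (unsk q c))"
      by (simp only: compat)
    moreover have "unsk p (unsk q a) < unsk p (unsk q b)" "unsk p (unsk q b) < unsk p (unsk q c)"
      using wm that by auto
    moreover have "a \<le> n" "b \<le> n" using that by auto
    ultimately show ?thesis unfolding K2_face_def Pf_def Qf_def using wv that by auto
  qed
  have YPQ: "Yf Pf r i j = Yf Qf r i j" if "i < j" "j \<le> n" "i \<noteq> p" "i \<noteq> q" "j \<noteq> p" "j \<noteq> q" for i j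
    using that r agree unfolding Yf_def by auto
  define y where "y t i j = (if i \<noteq> p \<and> j \<noteq> p then Yf Pf r i j else if i \<noteq> q \<and> j \<noteq> q then Yf Qf r i j else t)" for t i j
  have yP: "y t i j = Yf Pf r i j" if "i \<noteq> p" "j \<noteq> p" for t i j
    using that by (simp add: y_def)
  have yQ: "y t i j = Yf Qf r i j" if "i < j" "j \<le> n" "i \<noteq> q" "j \<noteq> q" for t i j
    using that YPQ by (auto simp: y_def)
  have y0: "y t i j = y 0 i j" if "i < j" "\<not> (i = p \<and> j = q)" for t i j
    using that pq by (auto simp: y_def)
  have ypq: "y t p q = t" for t using pq by (simp add: y_def)
  have Pnn: "0 \<le> int (Pf i j k)" "0 \<le> int (Qf i j k)" for i j k by auto
  have tri: "y t i k \<le> y t i j + y t j k" if "i < j" "j < k" "k \<le> n" "\<not> (p \<in> {i,j,k} \<and> q \<in> {i,j,k})" for t i j k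
  proof (cases "p \<in> {i,j,k}")
    case True
    then have "q \<notin> {i,j,k}" using that by auto
    then show ?thesis using that yQ[of i j t] yQ[of j k t] yQ[of i k t] Qrep[of i j k] Pnn[of i j k] by auto
  next
    case False
    then show ?thesis using that yP[of i j t] yP[of j k t] yP[of i k t] Prep[of i j k] Pnn[of i j k] by auto
  qed
  define L where "L = (\<lambda>k. y 0 k q - y 0 k p) ` {..<p} \<union> (\<lambda>k. y 0 p k - y 0 q k) ` {q<..n}"
  define U where "U = (\<lambda>k. y 0 p k + y 0 k q) ` {p<..<q}"
  have LU: "l \<le> u" if lL: "l \<in> L" and uU: "u \<in> U" for l u
  proof -
    obtain m where m: "p < m" "m < q" "u = y 0 p m + y 0 m q" using uU unfolding U_def by auto
    from lL consider k where "k < p" "l = y 0 k q - y 0 k p" | k where "q < k" "k \<le> n" "l = y 0 p k - y 0 q k"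
      unfolding L_def by auto
    then show ?thesis
    proof cases
      case 1
      have "y 0 k q \<le> y 0 k m + y 0 m q" using tri[of k m q 0] 1 m pq by auto
      moreover have "y 0 k m \<le> y 0 k p + y 0 p m" using tri[of k p m 0] 1 m pq by auto
      ultimately show ?thesis using 1 m by linarith
    next
      case 2
      have "y 0 p k \<le> y 0 p m + y 0 m k" using tri[of p m k 0] 2 m pq by auto
      moreover have "y 0 m k \<le> y 0 m q + y 0 q k" using tri[of m q k 0] 2 m pq by auto
      ultimately show ?thesis using 2 m by linarith
    qed
  qed
  have finL: "finite L" and finU: "finite U" unfolding L_def U_def by auto
  define t where "t = (if L = {} then Min U else Max L)"
  have tL: "l \<le> t" if "l \<in> L" for l
    using that finL by (auto simp: t_def)
  have tU: "t \<le> u" if "u \<in> U" for u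
  proof (cases "L = {}")
    case True then show ?thesis using that finU by (simp add: t_def)
  next
    case False then show ?thesis using that finL LU Max_in by (simp add: t_def)
  qed
  have triall: "y t i k \<le> y t i j + y t j k" if "i < j" "j < k" "k \<le> n" for i j k
  proof (cases "p \<in> {i,j,k} \<and> q \<in> {i,j,k}")
    case False then show ?thesis using tri that by blast
  next
    case True
    then have "(j = p \<and> k = q) \<or> (i = p \<and> k = q) \<or> (i = p \<and> j = q)" using that pq by auto
    then consider "j = p" "k = q" | "i = p" "k = q" | "i = p" "j = q" by blast
    then show ?thesis
    proof cases
      case 1
      have "y 0 i q - y 0 i p \<in> L" using 1 that unfolding L_def by auto
      then show ?thesis using tL 1 that y0[of i p t] y0[of i q t] ypq by force
    next
      case 2
      have "y 0 p j + y 0 j q \<in> U" using 2 that unfolding U_def by auto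
      then show ?thesis using tU 2 that y0[of p j t] y0[of j q t] ypq by force
    next
      case 3
      have "y 0 p k - y 0 q k \<in> L" using 3 that unfolding L_def by auto
      then show ?thesis using tL 3 that y0[of p k t] y0[of q k t] ypq pq by force
    qed
  qed
  define x where "x = (\<lambda>i j k. if i < j \<and> j < k \<and> k \<le> n then nat (y t i j + y t j k - y t i k) else 0)"
  have xS: "x \<in> K2_simplices n" unfolding x_def by (rule fromY) (rule triall)
  have fP: "K2_face n p x = cp"
  proof (intro ext)
    fix i k l
    show "K2_face n p x i k l = cp i k l"
    proof (cases "i < k \<and> k < l \<and> l \<le> n - 1")
      case True
      have s: "skip p i < skip p k" "skip p k < skip p l" "skip p l \<le> n"
        using True skip_facts n by auto
      have "int (Pf (skip p i) (skip p k) (skip p l)) =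
          y t (skip p i) (skip p k) + y t (skip p k) (skip p l) - y t (skip p i) (skip p l)"
        using Prep[OF s] skip_facts(1) yP by simp
      then have "x (skip p i) (skip p k) (skip p l) = Pf (skip p i) (skip p k) (skip p l)"
        unfolding x_def using s by simp
      then show ?thesis using True unfolding K2_face_def Pf_def by (simp add: skip_facts)
    next
      case False
      have "cp i k l = 0" using cpz False by blast
      then show ?thesis unfolding K2_face_def if_not_P[OF False] by simp
    qed
  qed
  have fQ: "K2_face n q x = cq"
  proof (intro ext)
    fix i k l
    show "K2_face n q x i k l = cq i k l"
    proof (cases "i < k \<and> k < l \<and> l \<le> n - 1")
      case True
      have s: "skip q i < skip q k" "skip q k < skip q l" "skip q l \<le> n"
        using True skip_facts n by auto
      have "int (Qf (skip q i) (skip q k) (skip q l)) =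
          y t (skip q i) (skip q k) + y t (skip q k) (skip q l) - y t (skip q i) (skip q l)"
        using Qrep[OF s] skip_facts(1) yQ s by simp
      then have "x (skip q i) (skip q k) (skip q l) = Qf (skip q i) (skip q k) (skip q l)"
        unfolding x_def using s by simp
      then show ?thesis using True unfolding K2_face_def Qf_def by (simp add: skip_facts)
    next
      case False
      have "cq i k l = 0" using cqz False by blast
      then show ?thesis unfolding K2_face_def if_not_P[OF False] by simp
    qed
  qed
  show ?thesis using xS fP fQ by blast
qed

lemma SS: "SS_complex K2_simplices K2_face"
  unfolding SS_complex_def using SS_main by blast

theorem mainTheorem1:
  shows "SS_complex K2_simplices K2_face \<and> \<not> Kan_complex K2_simplices K2_face"
  using SS not_Kan by blast

end
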